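(* Let $A_1A_2A_3A_4$ be a convex quadrilateral in $\mathbb{R}^2$ and let $c>0$. Consider positive weights $(B_1)_{1234},(B_2)_{1234},(B_3)_{1234},(B_4)_{1234}$ (variable weights) for which the weighted floating case holds and the weighted Fermat–Torricelli point (the minimizer of $\sum_{i=1}^4 (B_i)_{1234}\|X-A_i\|$) is a fixed interior point $A_0$, and write $\alpha_{i0j}=\angle A_iA_0A_j$. Then the dynamic plasticity of this variable weighted Fermat–Torricelli tree of degree four is given by the three equations \[ (B_1)_{1234}^2+(B_2)_{1234}^2+2(B_1)_{1234}(B_2)_{1234}\cos\alpha_{102}=(B_3)_{1234}^2+(B_4)_{1234}^2+2(B_3)_{1234}(B_4)_{1234}\cos\alpha_{304}, \] \[ (B_1)_{1234}^2+(B_4)_{1234}^2+2(B_1)_{1234}(B_4)_{1234}\cos\alpha_{104}=(B_2)_{1234}^2+(B_3)_{1234}^2+2(B_2)_{1234}(B_3)_{1234}\cos\alpha_{203}, \] \[ (B_1)_{1234}+(B_2)_{1234}+(B_3)_{1234}+(B_4)_{1234}=c. \]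
   Context: The weighted floating case for weights $B_i$ at $A_i$ means $\left\|\sum_{j\ne i}B_j\vec u_{ij}\right\|>B_i$ for each $i$, where $\vec u_{kl}$ is the unit vector from $A_k$ to $A_l$; then the weighted Fermat–Torricelli point $A_0$ is not a vertex and satisfies $\sum_{i=1}^4B_i\vec u_{0i}=\vec 0$. The dynamic plasticity of a weighted Fermat–Torricelli tree of degree four is the set of quadruples of weights with fixed sum $c$ for which the weighted Fermat–Torricelli point (and hence the tree joining it to the four vertices) stays the same for the fixed quadrilateral. *)

theory Defs
  imports "HOL-Analysis.Analysis"
begin

type_synonym point = "real^2"

definition orient :: "point \<Rightarrow> point \<Rightarrow> point \<Rightarrow> real" where
  "orient p q r = (q$1 - p$1) * (r$2 - p$2) - (q$2 - p$2) * (r$1 - p$1)"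

definition convex_quadrilateral :: "(nat \<Rightarrow> point) \<Rightarrow> bool" where
  "convex_quadrilateral A \<longleftrightarrow>
     (orient (A 1) (A 2) (A 3) > 0 \<and> orient (A 2) (A 3) (A 4) > 0 \<and>
      orient (A 3) (A 4) (A 1) > 0 \<and> orient (A 4) (A 1) (A 2) > 0) \<or>
     (orient (A 1) (A 2) (A 3) < 0 \<and> orient (A 2) (A 3) (A 4) < 0 \<and>
      orient (A 3) (A 4) (A 1) < 0 \<and> orient (A 4) (A 1) (A 2) < 0)"

definition unit_vec :: "point \<Rightarrow> point \<Rightarrow> point" where
  "unit_vec P Q = (1 / norm (Q - P)) *\<^sub>R (Q - P)"

definition angle_at :: "point \<Rightarrow> point \<Rightarrow> point \<Rightarrow> real" where
  "angle_at P Z Q = arccos (((P - Z) \<bullet> (Q - Z)) / (norm (P - Z) * norm (Q - Z)))"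

definition weighted_floating_case :: "(nat \<Rightarrow> point) \<Rightarrow> (nat \<Rightarrow> real) \<Rightarrow> bool" where
  "weighted_floating_case A B \<longleftrightarrow>
     (\<forall>i\<in>{1..4::nat}. norm (\<Sum>j\<in>{1..4} - {i}. B j *\<^sub>R unit_vec (A i) (A j)) > B i)"

definition weighted_distance_sum :: "(nat \<Rightarrow> point) \<Rightarrow> (nat \<Rightarrow> real) \<Rightarrow> point \<Rightarrow> real" where
  "weighted_distance_sum A B X = (\<Sum>i\<in>{1..4::nat}. B i * dist X (A i))"

definition is_weighted_FT_point :: "(nat \<Rightarrow> point) \<Rightarrow> (nat \<Rightarrow> real) \<Rightarrow> point \<Rightarrow> bool" where
  "is_weighted_FT_point A B X0 \<longleftrightarrow> (\<forall>X. weighted_distance_sum A B X0 \<le> weighted_distance_sum A B X)"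

definition dynamic_plasticity :: "(nat \<Rightarrow> point) \<Rightarrow> real \<Rightarrow> point \<Rightarrow> (nat \<Rightarrow> real) set" where
  "dynamic_plasticity A c A0 =
     {B. (\<forall>i\<in>{1..4::nat}. B i > 0) \<and> (\<Sum>i\<in>{1..4}. B i) = c \<and>
         weighted_floating_case A B \<and> is_weighted_FT_point A B A0}"

end

theory Submission
  imports Defs
begin


lemma orient_cyc: "orient p q r = orient q r p"
  by (simp add: orient_def algebra_simps)
lemma orient_swap: "orient p q r = - orient q p r"
  by (simp add: orient_def algebra_simps)

definition ow :: "point \<Rightarrow> point \<Rightarrow> point" where
  "ow p q = (\<chi> i. if i = 1 then -(q$2 - p$2) else q$1 - p$1)"

lemma orient_ow: "orient p q X = ow p q \<bullet> X - ow p q \<bullet> p"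
  by (simp add: orient_def ow_def inner_vec_def sum_2 algebra_simps)



lemma interior_halfspace:
  fixes w A0 :: point
  assumes "A0 \<in> interior (convex hull S)" "\<forall>X\<in>S. w \<bullet> X \<le> w \<bullet> A0"
  shows "w = 0"
proof (rule ccontr)
  assume wn: "w \<noteq> 0"
  have "S \<subseteq> {X. w \<bullet> X \<le> w \<bullet> A0}" using assms(2) by blast
  hence sub: "convex hull S \<subseteq> {X. w \<bullet> X \<le> w \<bullet> A0}"
    by (rule hull_minimal) (rule convex_halfspace_le)
  obtain e where e: "e > 0" "ball A0 e \<subseteq> convex hull S"
    using assms(1) mem_interior by blast
  have nw: "norm w > 0" using wn by simp
  define c where "c = e / (2 * norm w)"
  have c: "c > 0" using nw e by (simp add: c_def)
  define Y where "Y = A0 + c *\<^sub>R w"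
  have "dist A0 Y = norm (c *\<^sub>R w)" by (simp add: Y_def dist_norm)
  also have "\<dots> = c * norm w" using c by simp
  also have "\<dots> = e / 2" using nw by (simp add: c_def)
  finally have "dist A0 Y < e" using e(1) by simp
  hence "Y \<in> convex hull S" using e(2) by auto
  hence "w \<bullet> Y \<le> w \<bullet> A0" using sub by blast
  moreover have "w \<bullet> Y = w \<bullet> A0 + c * (w \<bullet> w)"
    by (simp add: Y_def inner_add_right)
  moreover have "c * (w \<bullet> w) > 0" using c wn by simp
  ultimately show False by linarith
qed


lemma cos_angle:
  fixes P Z Q :: point
  assumes "P \<noteq> Z" "Q \<noteq> Z"
  shows "cos (angle_at P Z Q) = unit_vec Z P \<bullet> unit_vec Z Q"
proof -
  define N where "N = (P - Z) \<bullet> (Q - Z)"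
  define D where "D = norm (P - Z) * norm (Q - Z)"
  have D: "D > 0" using assms by (simp add: D_def)
  have cs: "\<bar>N\<bar> \<le> D" unfolding N_def D_def by (rule Cauchy_Schwarz_ineq2)
  have "\<bar>N / D\<bar> = \<bar>N\<bar> / D" using D by simp
  also have "\<dots> \<le> 1" using cs D by simp
  finally have a: "\<bar>N / D\<bar> \<le> 1" .
  have "cos (angle_at P Z Q) = cos (arccos (N / D))" by (simp add: angle_at_def N_def D_def)
  also have "\<dots> = N / D" using a by (intro cos_arccos; linarith)
  also have "\<dots> = unit_vec Z P \<bullet> unit_vec Z Q" by (simp add: unit_vec_def N_def D_def)
  finally show ?thesis .
qed

lemma norm_unit: "P \<noteq> Z \<Longrightarrow> norm (unit_vec Z P) = 1"
  by (simp add: unit_vec_def)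


lemma dn: fixes a s :: "real^2" assumes "a \<noteq> 0"
  shows "((\<lambda>t. norm (a + t *\<^sub>R s)) has_real_derivative (a \<bullet> s) / norm a) (at 0)"
proof -
  have e: "norm (a + t *\<^sub>R s) = sqrt (a \<bullet> a + t * (2 * (a \<bullet> s)) + t^2 * (s \<bullet> s))" for t
    by (simp add: norm_eq_sqrt_inner inner_add_left inner_add_right power2_eq_square algebra_simps inner_commute)
  have p: "0 < a \<bullet> a" using assms by simp
  have d1: "((\<lambda>t. a \<bullet> a + t * (2 * (a \<bullet> s)) + t^2 * (s \<bullet> s)) has_real_derivative (2 * (a \<bullet> s))) (at 0)"
    by (auto intro!: derivative_eq_intros)
  have d2: "DERIV sqrt (a \<bullet> a + 0 * (2 * (a \<bullet> s)) + 0^2 * (s \<bullet> s)) :> inverse (sqrt (a\<bullet>a)) / 2"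
    using DERIV_real_sqrt[OF p] by simp
  have "((\<lambda>t. sqrt (a \<bullet> a + t * (2 * (a \<bullet> s)) + t^2 * (s \<bullet> s))) has_real_derivative (2 * (a \<bullet> s)) * (inverse (sqrt (a\<bullet>a)) / 2)) (at 0)"
    using DERIV_chain'[OF d1 d2] by (simp add: o_def mult.commute)
  moreover have "(2 * (a \<bullet> s)) * (inverse (sqrt (a\<bullet>a)) / 2) = (a \<bullet> s) / norm a"
    by (simp add: norm_eq_sqrt_inner field_simps)
  ultimately show ?thesis unfolding e by simp
qed



lemma interior_orient:
  fixes A0 :: point
  assumes "A0 \<in> interior (convex hull S)" "\<forall>X\<in>S. k * orient p q X \<le> k * orient p q A0"
    "Y \<in> S"
  shows "k * orient p q Y = 0"
proof -
  have "\<forall>X\<in>S. (k *\<^sub>R ow p q) \<bullet> X \<le> (k *\<^sub>R ow p q) \<bullet> A0"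
    using assms(2) by (simp add: orient_ow algebra_simps)
  hence "k *\<^sub>R ow p q = 0" using interior_halfspace[OF assms(1)] by blast
  hence "k = 0 \<or> ow p q = 0" by simp
  thus ?thesis by (auto simp: orient_ow)
qed

lemma diag_identity:
  fixes P1 P2 P3 P4 A0 s :: point
  shows "orient P2 P4 P1 * (s \<bullet> (P3 - A0)) - orient P2 P4 P3 * (s \<bullet> (P1 - A0))
       + orient P1 P3 P2 * (s \<bullet> (P4 - A0)) - orient P1 P3 P4 * (s \<bullet> (P2 - A0)) = 0"
  by (simp add: orient_def inner_vec_def sum_2 algebra_simps)

lemma par_cross:
  fixes d v v' :: point
  assumes "c *\<^sub>R d = m *\<^sub>R v" "c \<noteq> 0" "c' *\<^sub>R d = m' *\<^sub>R v'" "c' \<noteq> 0" "d \<noteq> 0"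
  shows "v$1 * v'$2 - v$2 * v'$1 = 0"
proof -
  have m: "m \<noteq> 0"
  proof
    assume "m = 0" hence "c *\<^sub>R d = 0" using assms(1) by simp
    thus False using assms(2,5) by simp
  qed
  have m': "m' \<noteq> 0"
  proof
    assume "m' = 0" hence "c' *\<^sub>R d = 0" using assms(3) by simp
    thus False using assms(4,5) by simp
  qed
  have e: "c * d$k = m * v$k" "c' * d$k = m' * v'$k" for k
  proof -
    have "(c *\<^sub>R d)$k = (m *\<^sub>R v)$k" "(c' *\<^sub>R d)$k = (m' *\<^sub>R v')$k"
      using assms(1,3) by simp_all
    thus "c * d$k = m * v$k" "c' * d$k = m' * v'$k" by simp_all
  qed
  have "m * m' * (v$1 * v'$2 - v$2 * v'$1) = (m * v$1) * (m' * v'$2) - (m * v$2) * (m' * v'$1)"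
    by (simp add: algebra_simps)
  also have "\<dots> = (c * d$1) * (c' * d$2) - (c * d$2) * (c' * d$1)" by (simp add: e)
  also have "\<dots> = 0" by (simp add: algebra_simps)
  finally show ?thesis using m m' by simp
qed




lemma four: "{1..4::nat} = {1,2,3,4}" by auto

lemma sum4: "(\<Sum>i\<in>{1..4::nat}. f i) = f 1 + f 2 + f 3 + f 4"
  unfolding four by (simp add: add.assoc)

lemma sq_lemma:
  fixes u v :: point
  assumes "norm u = 1" "norm v = 1"
  shows "(a *\<^sub>R u + b *\<^sub>R v) \<bullet> (a *\<^sub>R u + b *\<^sub>R v) = a^2 + b^2 + 2*a*b*(u \<bullet> v)"
proof -
  have uu: "u \<bullet> u = 1" "v \<bullet> v = 1" using assms by (simp_all add: dot_square_norm)
  show ?thesis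
    by (simp add: inner_add_left inner_add_right uu inner_commute[of v u] power2_eq_square algebra_simps)
qed

lemma sub_grad:
  fixes a b X :: point
  assumes "a \<noteq> b"
  shows "norm (a - b) + (X - a) \<bullet> ((1 / norm (a - b)) *\<^sub>R (a - b)) \<le> norm (X - b)"
proof -
  define n where "n = norm (a - b)"
  have n: "n > 0" using assms by (simp add: n_def)
  have cs: "(X - b) \<bullet> (a - b) \<le> norm (X - b) * n" unfolding n_def by (rule norm_cauchy_schwarz)
  have id: "(X - b) \<bullet> (a - b) = (X - a) \<bullet> (a - b) + n * n"
  proof -
    have "X - b = (X - a) + (a - b)" by simp
    hence "(X - b) \<bullet> (a - b) = (X - a) \<bullet> (a - b) + (a - b) \<bullet> (a - b)"
      by (metis inner_add_left)
    thus ?thesis by (simp add: n_def dot_square_norm power2_eq_square)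
  qed
  have sc: "(X - a) \<bullet> ((1 / n) *\<^sub>R (a - b)) = ((X - a) \<bullet> (a - b)) / n"
    by (simp only: inner_scaleR_right) simp
  have "n + (X - a) \<bullet> ((1 / n) *\<^sub>R (a - b)) = ((X - b) \<bullet> (a - b)) / n"
    unfolding sc id using n by (simp add: field_simps)
  also have "\<dots> \<le> norm (X - b)" using cs n by (simp add: divide_le_eq)
  finally show ?thesis by (simp add: n_def)
qed

lemma sign_contra:
  fixes L1 L3 M2 M4 a1 a2 a3 a4 :: real
  assumes "L1*a3 - L3*a1 + M2*a4 - M4*a2 = 0" "L1>0" "L3<0" "M2<0" "M4>0"
    "(a1>0 \<and> a3>0 \<and> a2 \<le> 0 \<and> a4 \<le> 0) \<or> (a1 \<le> 0 \<and> a3 \<le> 0 \<and> a2>0 \<and> a4>0)"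
  shows False
  using assms(6)
proof
  assume h: "a1>0 \<and> a3>0 \<and> a2 \<le> 0 \<and> a4 \<le> 0"
  have "L1*a3 > 0" using h assms by simp
  moreover have "L3*a1 < 0" using h assms by (simp add: mult_neg_pos)
  moreover have "M2*a4 \<ge> 0" using h assms by (simp add: mult_nonpos_nonpos)
  moreover have "M4*a2 \<le> 0" using h assms by (simp add: mult_nonneg_nonpos)
  ultimately show False using assms(1) by linarith
next
  assume h: "a1 \<le> 0 \<and> a3 \<le> 0 \<and> a2>0 \<and> a4>0"
  have "L1*a3 \<le> 0" using h assms by (simp add: mult_nonneg_nonpos)
  moreover have "L3*a1 \<ge> 0" using h assms by (simp add: mult_nonpos_nonpos)
  moreover have "M2*a4 < 0" using h assms by (simp add: mult_neg_pos)
  moreover have "M4*a2 > 0" using h assms by simp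
  ultimately show False using assms(1) by linarith
qed

lemma not_vertex:
  fixes A0 P Q R T :: point
  assumes "A0 \<in> interior (convex hull S)" "S \<subseteq> {P,Q,R,T}" "P \<in> S"
    "k * orient Q T P > 0" "k * orient Q T R \<le> k * orient Q T P"
  shows "A0 \<noteq> P"
proof
  assume e: "A0 = P"
  have z: "orient Q T Q = 0" "orient Q T T = 0" by (simp_all add: orient_def)
  have "\<forall>X\<in>S. k * orient Q T X \<le> k * orient Q T A0"
  proof
    fix X assume "X \<in> S"
    hence "X = P \<or> X = Q \<or> X = R \<or> X = T" using assms(2) by blast
    thus "k * orient Q T X \<le> k * orient Q T A0" using e z assms(4,5) by auto
  qed
  hence "k * orient Q T P = 0" using interior_orient[OF assms(1)] assms(3) by blast
  thus False using assms(4) by auto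
qed

lemma phi_par:
  fixes A0 Ai Al :: point
  assumes "norm (A0 - Al) * norm (Ai - Al) = (A0 - Al) \<bullet> (Ai - Al)"
  shows "norm (Ai - Al) *\<^sub>R (A0 - Ai) = (norm (A0 - Al) - norm (Ai - Al)) *\<^sub>R (Ai - Al)"
proof -
  have "norm (A0 - Al) *\<^sub>R (Ai - Al) = norm (Ai - Al) *\<^sub>R (A0 - Al)"
    using assms norm_cauchy_schwarz_eq[of "A0 - Al" "Ai - Al"] by simp
  moreover have "A0 - Ai = (A0 - Al) - (Ai - Al)" by simp
  ultimately show ?thesis by (simp add: algebra_simps)
qed

lemma grad_id:
  fixes a b X :: point
  assumes "a \<noteq> b"
  shows "norm (a - b) + (X - a) \<bullet> ((1 / norm (a - b)) *\<^sub>R (a - b)) = ((X - b) \<bullet> (a - b)) / norm (a - b)"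
proof -
  define n where "n = norm (a - b)"
  have n: "n > 0" using assms by (simp add: n_def)
  have id: "(X - b) \<bullet> (a - b) = (X - a) \<bullet> (a - b) + n * n"
  proof -
    have "X - b = (X - a) + (a - b)" by simp
    hence "(X - b) \<bullet> (a - b) = (X - a) \<bullet> (a - b) + (a - b) \<bullet> (a - b)"
      by (metis inner_add_left)
    thus ?thesis by (simp add: n_def dot_square_norm power2_eq_square)
  qed
  have sc: "(X - a) \<bullet> ((1 / n) *\<^sub>R (a - b)) = ((X - a) \<bullet> (a - b)) / n"
    by (simp only: inner_scaleR_right) simp
  show ?thesis
    unfolding n_def[symmetric] sc id using n by (simp add: field_simps)
qed

lemma floating_i:
  fixes A :: "nat \<Rightarrow> point" and A0 :: point and B :: "nat \<Rightarrow> real"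
  assumes iT: "i \<in> {1..4}" and jT: "j \<in> {1..4} - {i}" and kT: "k \<in> {1..4} - {i}"
    and dif: "\<forall>l\<in>{1..4} - {i}. A l \<noteq> A i"
    and o: "orient (A i) (A j) (A k) \<noteq> 0"
    and d0: "A0 \<noteq> A i"
    and Bp: "\<forall>l\<in>{1..4::nat}. B l > 0"
    and le: "weighted_distance_sum A B A0 \<le> weighted_distance_sum A B (A i)"
  shows "norm (\<Sum>l\<in>{1..4} - {i}. B l *\<^sub>R unit_vec (A i) (A l)) > B i"
proof (rule ccontr)
  define T where "T = {1..4::nat} - {i}"
  define g where "g = (\<Sum>l\<in>T. B l *\<^sub>R unit_vec (A i) (A l))"
  define d where "d = A0 - A i"
  define \<rho> where "\<rho> l = norm (A i - A l)" for l
  define e where "e l = unit_vec (A i) (A l)" for l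
  define \<phi> where "\<phi> l = norm (A0 - A l) - (\<rho> l - d \<bullet> e l)" for l
  assume "\<not> ?thesis"
  hence gle: "norm g \<le> B i" by (simp add: g_def T_def)
  have fin: "finite T" by (simp add: T_def)
  have ev: "(1 / norm (A i - A l)) *\<^sub>R (A i - A l) = - e l" for l
    by (simp add: e_def unit_vec_def norm_minus_commute[of "A i"] scaleR_right_diff_distrib)
  have gid: "norm (A i - A l) + (A0 - A i) \<bullet> ((1 / norm (A i - A l)) *\<^sub>R (A i - A l))
      = ((A0 - A l) \<bullet> (A i - A l)) / norm (A i - A l)" if "l \<in> T" for l
  proof -
    have "A i \<noteq> A l" using dif that by (auto simp: T_def)
    thus ?thesis by (rule grad_id)
  qed
  have phi_nn: "\<phi> l \<ge> 0" if "l \<in> T" for l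
  proof -
    have "norm (A i - A l) + (A0 - A i) \<bullet> ((1 / norm (A i - A l)) *\<^sub>R (A i - A l)) \<le> norm (A0 - A l)"
    proof -
      have "A i \<noteq> A l" using dif that by (auto simp: T_def)
      thus ?thesis by (rule sub_grad)
    qed
    thus ?thesis unfolding ev by (simp add: \<phi>_def \<rho>_def d_def)
  qed
  have wA0: "weighted_distance_sum A B A0 = B i * norm d + (\<Sum>l\<in>T. B l * norm (A0 - A l))"
    unfolding weighted_distance_sum_def T_def d_def dist_norm
    by (rule sum.remove) (use iT in auto)
  have wAi: "weighted_distance_sum A B (A i) = (\<Sum>l\<in>T. B l * \<rho> l)"
  proof -
    have "weighted_distance_sum A B (A i) = B i * norm (A i - A i) + (\<Sum>l\<in>T. B l * \<rho> l)"
      unfolding weighted_distance_sum_def T_def \<rho>_def dist_norm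
      by (rule sum.remove) (use iT in auto)
    thus ?thesis by simp
  qed
  have split: "B l * norm (A0 - A l) = B l * \<rho> l - B l * (d \<bullet> e l) + B l * \<phi> l" for l
    by (simp add: \<phi>_def algebra_simps)
  have dg: "(\<Sum>l\<in>T. B l * (d \<bullet> e l)) = d \<bullet> g"
    by (simp add: g_def e_def inner_sum_right)
  have S: "(\<Sum>l\<in>T. B l * norm (A0 - A l)) = (\<Sum>l\<in>T. B l * \<rho> l) - d \<bullet> g + (\<Sum>l\<in>T. B l * \<phi> l)"
    unfolding split dg[symmetric] by (simp add: sum.distrib sum_subtractf)
  have "d \<bullet> g \<le> norm d * norm g" by (rule norm_cauchy_schwarz)
  also have "\<dots> \<le> norm d * B i" using gle by (simp add: mult_left_mono)
  finally have dgle: "d \<bullet> g \<le> norm d * B i" .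
  have nn: "\<forall>l\<in>T. B l * \<phi> l \<ge> 0"
  proof
    fix l assume l: "l \<in> T"
    have "B l > 0" using Bp l by (auto simp: T_def)
    thus "B l * \<phi> l \<ge> 0" using phi_nn[OF l] by simp
  qed
  have "(\<Sum>l\<in>T. B l * \<phi> l) \<le> 0" using le wA0 wAi S dgle by (simp add: algebra_simps)
  moreover have "(\<Sum>l\<in>T. B l * \<phi> l) \<ge> 0" using nn by (simp add: sum_nonneg)
  ultimately have "(\<Sum>l\<in>T. B l * \<phi> l) = 0" by simp
  moreover have "(\<Sum>l\<in>T. B l * \<phi> l) = 0 \<longleftrightarrow> (\<forall>l\<in>T. B l * \<phi> l = 0)"
    using nn by (intro sum_nonneg_eq_0_iff[OF fin]) simp
  ultimately have z: "\<forall>l\<in>T. B l * \<phi> l = 0" by simp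
  have phi0: "\<phi> l = 0" if "l \<in> T" for l
  proof -
    have "B l > 0" using Bp that by (auto simp: T_def)
    moreover have "B l * \<phi> l = 0" using z that by blast
    ultimately show ?thesis by simp
  qed
  have par: "\<rho> l *\<^sub>R d = (norm (A0 - A l) - \<rho> l) *\<^sub>R (A i - A l)" "\<rho> l \<noteq> 0" if "l \<in> T" for l
  proof -
    have "norm (A i - A l) + (A0 - A i) \<bullet> ((1 / norm (A i - A l)) *\<^sub>R (A i - A l)) = norm (A0 - A l)"
      using phi0[OF that] unfolding ev by (simp add: \<phi>_def \<rho>_def d_def)
    hence "((A0 - A l) \<bullet> (A i - A l)) / norm (A i - A l) = norm (A0 - A l)" using gid[OF that] by simp
    moreover have "norm (A i - A l) \<noteq> 0" using dif that by (auto simp: T_def)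
    ultimately have "norm (A0 - A l) * norm (A i - A l) = (A0 - A l) \<bullet> (A i - A l)"
      by (simp add: field_simps)
    from phi_par[OF this] show "\<rho> l *\<^sub>R d = (norm (A0 - A l) - \<rho> l) *\<^sub>R (A i - A l)"
      by (simp add: \<rho>_def d_def)
    show "\<rho> l \<noteq> 0" using dif that by (auto simp: T_def \<rho>_def)
  qed
  have dn0: "d \<noteq> 0" using d0 by (simp add: d_def)
  have "(A i - A j)$1 * (A i - A k)$2 - (A i - A j)$2 * (A i - A k)$1 = 0"
    using par_cross[OF par(1)[of j] par(2)[of j] par(1)[of k] par(2)[of k] dn0] jT kT
    by (simp add: T_def)
  hence "orient (A i) (A j) (A k) = 0" by (simp add: orient_def algebra_simps)
  thus False using o by simp
qed




lemma quad:
  fixes x y z w :: "'a::real_inner"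
  assumes "(x+y) \<bullet> (x+y) = (z+w) \<bullet> (z+w)" "(x+w) \<bullet> (x+w) = (y+z) \<bullet> (y+z)"
  shows "x \<bullet> (x+y+z+w) = z \<bullet> (x+y+z+w)" "y \<bullet> (x+y+z+w) = w \<bullet> (x+y+z+w)"
  using assms by (simp_all add: inner_add_left inner_add_right inner_commute)

lemma unit_s: "(B *\<^sub>R unit_vec Z P) \<bullet> s = (B / norm (P - Z)) * ((P - Z) \<bullet> s)"
  by (simp add: unit_vec_def)

lemma unit_neg: "(1 / norm (Z - P)) *\<^sub>R (Z - P) = - unit_vec Z P"
  by (simp add: unit_vec_def norm_minus_commute[of Z P] scaleR_right_diff_distrib)

lemma deriv_rel: "((Z - P) \<bullet> s) / norm (Z - P) = - (unit_vec Z P \<bullet> s)"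
proof -
  have "((Z - P) \<bullet> s) / norm (Z - P) = ((1 / norm (Z - P)) *\<^sub>R (Z - P)) \<bullet> s" by simp
  also have "\<dots> = - (unit_vec Z P \<bullet> s)" by (simp only: unit_neg inner_minus_left)
  finally show ?thesis .
qed




theorem proposition2:
  fixes A :: "nat \<Rightarrow> real^2" and A0 :: "real^2" and B :: "nat \<Rightarrow> real" and c :: real
  assumes "convex_quadrilateral A"
    and "c > 0"
    and "A0 \<in> interior (convex hull {A 1, A 2, A 3, A 4})"
    and "\<forall>i\<in>{1..4::nat}. B i > 0"
  shows "B \<in> dynamic_plasticity A c A0 \<longleftrightarrow>
    (B 1 ^ 2 + B 2 ^ 2 + 2 * B 1 * B 2 * cos (angle_at (A 1) A0 (A 2)) =
       B 3 ^ 2 + B 4 ^ 2 + 2 * B 3 * B 4 * cos (angle_at (A 3) A0 (A 4)) \<and>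
     B 1 ^ 2 + B 4 ^ 2 + 2 * B 1 * B 4 * cos (angle_at (A 1) A0 (A 4)) =
       B 2 ^ 2 + B 3 ^ 2 + 2 * B 2 * B 3 * cos (angle_at (A 2) A0 (A 3)) \<and>
     B 1 + B 2 + B 3 + B 4 = c)"
proof -
  note cq = assms(1) and int = assms(3) and Bp = assms(4)
  define S where "S = {A 1, A 2, A 3, A 4}"
  have intS: "A0 \<in> interior (convex hull S)" using int by (simp add: S_def)
  have B1: "B 1 > 0" and B2: "B 2 > 0" and B3: "B 3 > 0" and B4: "B 4 > 0" using Bp by auto
  define \<sigma> :: real where "\<sigma> = (if orient (A 1) (A 2) (A 3) > 0 then 1 else -1)"
  have sg: "\<sigma> * orient (A 1) (A 2) (A 3) > 0" "\<sigma> * orient (A 2) (A 3) (A 4) > 0"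
    "\<sigma> * orient (A 3) (A 4) (A 1) > 0" "\<sigma> * orient (A 4) (A 1) (A 2) > 0"
    using cq unfolding convex_quadrilateral_def \<sigma>_def by auto
  have o1: "orient (A 2) (A 4) (A 1) = orient (A 4) (A 1) (A 2)"
    and o2: "orient (A 2) (A 4) (A 3) = - orient (A 2) (A 3) (A 4)"
    and o3: "orient (A 1) (A 3) (A 2) = - orient (A 1) (A 2) (A 3)"
    and o4: "orient (A 1) (A 3) (A 4) = orient (A 3) (A 4) (A 1)"
    and o5: "orient (A 3) (A 1) (A 2) = orient (A 1) (A 2) (A 3)"
    and o6: "orient (A 3) (A 1) (A 4) = - orient (A 3) (A 4) (A 1)"
    and o7: "orient (A 4) (A 2) (A 3) = orient (A 2) (A 3) (A 4)"
    and o8: "orient (A 4) (A 2) (A 1) = - orient (A 4) (A 1) (A 2)"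
    by (simp_all add: orient_def algebra_simps)
  have n1: "A0 \<noteq> A 1"
    by (rule not_vertex[OF intS, of "A 1" "A 2" "A 3" "A 4" \<sigma>]) (use sg o1 o2 in \<open>auto simp: S_def\<close>)
  have n2: "A0 \<noteq> A 2"
    by (rule not_vertex[OF intS, of "A 2" "A 3" "A 4" "A 1" \<sigma>]) (use sg o5 o6 in \<open>auto simp: S_def\<close>)
  have n3: "A0 \<noteq> A 3"
    by (rule not_vertex[OF intS, of "A 3" "A 4" "A 1" "A 2" \<sigma>]) (use sg o7 o8 in \<open>auto simp: S_def\<close>)
  have n4: "A0 \<noteq> A 4"
    by (rule not_vertex[OF intS, of "A 4" "A 1" "A 2" "A 3" \<sigma>]) (use sg o3 o4 in \<open>auto simp: S_def\<close>)
  have on: "orient (A 1) (A 2) (A 3) \<noteq> 0" "orient (A 2) (A 3) (A 4) \<noteq> 0"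
    "orient (A 3) (A 4) (A 1) \<noteq> 0" "orient (A 4) (A 1) (A 2) \<noteq> 0"
    using sg by auto
  have d12: "A 1 \<noteq> A 2" using on(1) by (auto simp: orient_def)
  have d13: "A 1 \<noteq> A 3" using on(1) by (auto simp: orient_def)
  have d23: "A 2 \<noteq> A 3" using on(1) by (auto simp: orient_def)
  have d14: "A 1 \<noteq> A 4" using on(3) by (auto simp: orient_def)
  have d24: "A 2 \<noteq> A 4" using on(2) by (auto simp: orient_def)
  have d34: "A 3 \<noteq> A 4" using on(2) by (auto simp: orient_def)
  define u where "u i = unit_vec A0 (A i)" for i
  have nu: "norm (u 1) = 1" "norm (u 2) = 1" "norm (u 3) = 1" "norm (u 4) = 1"
    unfolding u_def using n1 n2 n3 n4 by (auto intro!: norm_unit)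
  define x where "x = B 1 *\<^sub>R u 1"
  define y where "y = B 2 *\<^sub>R u 2"
  define z where "z = B 3 *\<^sub>R u 3"
  define w where "w = B 4 *\<^sub>R u 4"
  define s where "s = x + y + z + w"
  have cs: "cos (angle_at (A a) A0 (A b)) = u a \<bullet> u b" if "A a \<noteq> A0" "A b \<noteq> A0" for a b
    unfolding u_def using that by (rule cos_angle)
  have E1: "(B 1 ^ 2 + B 2 ^ 2 + 2 * B 1 * B 2 * cos (angle_at (A 1) A0 (A 2)) =
       B 3 ^ 2 + B 4 ^ 2 + 2 * B 3 * B 4 * cos (angle_at (A 3) A0 (A 4))) \<longleftrightarrow>
       (x + y) \<bullet> (x + y) = (z + w) \<bullet> (z + w)"
    unfolding x_def y_def z_def w_def sq_lemma[OF nu(1) nu(2)] sq_lemma[OF nu(3) nu(4)]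
    using cs n1 n2 n3 n4 by simp
  have E2: "(B 1 ^ 2 + B 4 ^ 2 + 2 * B 1 * B 4 * cos (angle_at (A 1) A0 (A 4)) =
       B 2 ^ 2 + B 3 ^ 2 + 2 * B 2 * B 3 * cos (angle_at (A 2) A0 (A 3))) \<longleftrightarrow>
       (x + w) \<bullet> (x + w) = (y + z) \<bullet> (y + z)"
    unfolding x_def y_def z_def w_def sq_lemma[OF nu(1) nu(4)] sq_lemma[OF nu(2) nu(3)]
    using cs n1 n2 n3 n4 by simp
  have wdsX: "weighted_distance_sum A B X = B 1 * norm (X - A 1) + B 2 * norm (X - A 2)
      + B 3 * norm (X - A 3) + B 4 * norm (X - A 4)" for X
    unfolding weighted_distance_sum_def sum4 by (simp add: dist_norm)
  have FT: "is_weighted_FT_point A B A0" if s0: "s = 0"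
    unfolding is_weighted_FT_point_def
  proof
    fix X
    have g: "norm (A0 - A i) - (X - A0) \<bullet> u i \<le> norm (X - A i)" if "A0 \<noteq> A i" for i
      using sub_grad[OF that, of X] unfolding unit_neg u_def by simp
    have g1: "B 1 * (norm (A0 - A 1) - (X - A0) \<bullet> u 1) \<le> B 1 * norm (X - A 1)"
      using g[OF n1] B1 by (simp add: mult_left_mono)
    have g2: "B 2 * (norm (A0 - A 2) - (X - A0) \<bullet> u 2) \<le> B 2 * norm (X - A 2)"
      using g[OF n2] B2 by (simp add: mult_left_mono)
    have g3: "B 3 * (norm (A0 - A 3) - (X - A0) \<bullet> u 3) \<le> B 3 * norm (X - A 3)"
      using g[OF n3] B3 by (simp add: mult_left_mono)
    have g4: "B 4 * (norm (A0 - A 4) - (X - A0) \<bullet> u 4) \<le> B 4 * norm (X - A 4)"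
      using g[OF n4] B4 by (simp add: mult_left_mono)
    have "(X - A0) \<bullet> s = B 1 * ((X - A0) \<bullet> u 1) + B 2 * ((X - A0) \<bullet> u 2)
        + B 3 * ((X - A0) \<bullet> u 3) + B 4 * ((X - A0) \<bullet> u 4)"
      by (simp add: s_def x_def y_def z_def w_def inner_add_right)
    hence z0: "B 1 * ((X - A0) \<bullet> u 1) + B 2 * ((X - A0) \<bullet> u 2)
        + B 3 * ((X - A0) \<bullet> u 3) + B 4 * ((X - A0) \<bullet> u 4) = 0" using s0 by simp
    show "weighted_distance_sum A B A0 \<le> weighted_distance_sum A B X"
      unfolding wdsX using g1 g2 g3 g4 z0 by (simp add: algebra_simps)
  qed
  have S0: "s = 0" if ft: "is_weighted_FT_point A B A0"
  proof -
    define g where "g t = B 1 * norm ((A0 - A 1) + t *\<^sub>R s) + B 2 * norm ((A0 - A 2) + t *\<^sub>R s)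
      + B 3 * norm ((A0 - A 3) + t *\<^sub>R s) + B 4 * norm ((A0 - A 4) + t *\<^sub>R s)" for t
    define l where "l = B 1 * (((A0 - A 1) \<bullet> s) / norm (A0 - A 1)) + B 2 * (((A0 - A 2) \<bullet> s) / norm (A0 - A 2))
      + B 3 * (((A0 - A 3) \<bullet> s) / norm (A0 - A 3)) + B 4 * (((A0 - A 4) \<bullet> s) / norm (A0 - A 4))"
    have nz: "A0 - A 1 \<noteq> 0" "A0 - A 2 \<noteq> 0" "A0 - A 3 \<noteq> 0" "A0 - A 4 \<noteq> 0"
      using n1 n2 n3 n4 by auto
    have D: "(g has_real_derivative l) (at 0)"
      unfolding g_def[abs_def] l_def
      by (intro DERIV_add DERIV_cmult dn nz)
    have gw: "g t = weighted_distance_sum A B (A0 + t *\<^sub>R s)" for t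
      unfolding wdsX g_def by (simp add: algebra_simps)
    have "\<forall>t. \<bar>0 - t\<bar> < 1 \<longrightarrow> g 0 \<le> g t"
      using ft unfolding is_weighted_FT_point_def gw by simp
    hence l0: "l = 0" using DERIV_local_min[OF D, of 1] by simp
    have "l = - (B 1 * (u 1 \<bullet> s) + B 2 * (u 2 \<bullet> s) + B 3 * (u 3 \<bullet> s) + B 4 * (u 4 \<bullet> s))"
      unfolding l_def u_def deriv_rel by simp
    also have "B 1 * (u 1 \<bullet> s) + B 2 * (u 2 \<bullet> s) + B 3 * (u 3 \<bullet> s) + B 4 * (u 4 \<bullet> s) = s \<bullet> s"
    proof -
      have "s \<bullet> s = (x + y + z + w) \<bullet> s" by (simp add: s_def)
      thus ?thesis by (simp add: x_def y_def z_def w_def inner_add_left)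
    qed
    finally have "s \<bullet> s = 0" using l0 by simp
    thus "s = 0" by simp
  qed
  have FL: "weighted_floating_case A B" if s0: "s = 0"
    unfolding weighted_floating_case_def
  proof
    fix i :: nat assume iT: "i \<in> {1..4}"
    have le: "weighted_distance_sum A B A0 \<le> weighted_distance_sum A B (A i)"
      using FT[OF s0] by (simp add: is_weighted_FT_point_def)
    have dif: "\<forall>l\<in>{1..4} - {i}. A l \<noteq> A i"
      using iT d12 d13 d14 d23 d24 d34 unfolding four by auto
    have "i = 1 \<or> i = 2 \<or> i = 3 \<or> i = 4" using iT by auto
    thus "norm (\<Sum>j\<in>{1..4} - {i}. B j *\<^sub>R unit_vec (A i) (A j)) > B i"
    proof (elim disjE)
      assume i: "i = 1"
      show ?thesis using floating_i[OF iT _ _ dif _ _ Bp le, of 2 3] on n1 i by simp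
    next
      assume i: "i = 2"
      show ?thesis using floating_i[OF iT _ _ dif _ _ Bp le, of 3 4] on n2 i by simp
    next
      assume i: "i = 3"
      show ?thesis using floating_i[OF iT _ _ dif _ _ Bp le, of 4 1] on n3 i by simp
    next
      assume i: "i = 4"
      show ?thesis using floating_i[OF iT _ _ dif _ _ Bp le, of 1 2] on n4 i by simp
    qed
  qed
  have EQ1: "(x + y) \<bullet> (x + y) = (z + w) \<bullet> (z + w) \<and> (x + w) \<bullet> (x + w) = (y + z) \<bullet> (y + z)"
    if s0: "s = 0"
  proof -
    have "(x + y) + (z + w) = 0" using s0 unfolding s_def by (simp add: add.assoc)
    hence "x + y = - (z + w)" by (simp only: eq_neg_iff_add_eq_0)
    moreover have "(x + w) + (y + z) = 0" using s0 unfolding s_def by (simp add: algebra_simps)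
    hence "x + w = - (y + z)" by (simp only: eq_neg_iff_add_eq_0)
    ultimately show ?thesis by (simp only: inner_minus_left inner_minus_right minus_minus)
  qed
  have EQ2: "s = 0" if h1: "(x + y) \<bullet> (x + y) = (z + w) \<bullet> (z + w)"
    and h2: "(x + w) \<bullet> (x + w) = (y + z) \<bullet> (y + z)"
  proof (rule ccontr)
    assume sn: "s \<noteq> 0"
    have q1: "x \<bullet> s = z \<bullet> s" and q2: "y \<bullet> s = w \<bullet> s"
      using quad[OF h1 h2] by (simp_all add: s_def)
    have ss: "s \<bullet> s = x \<bullet> s + y \<bullet> s + z \<bullet> s + w \<bullet> s"
    proof -
      have "s \<bullet> s = (x + y + z + w) \<bullet> s" by (simp add: s_def)
      thus ?thesis by (simp add: inner_add_left)
    qed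
    have pos: "x \<bullet> s + y \<bullet> s > 0" using ss q1 q2 sn
      by (metis add.assoc inner_gt_zero_iff mult_2 zero_less_double_add_iff_zero_less_single_add
          add.commute)
    define a where "a i = s \<bullet> (A i - A0)" for i
    define cc where "cc i = B i / norm (A i - A0)" for i
    have cc: "cc 1 > 0" "cc 2 > 0" "cc 3 > 0" "cc 4 > 0"
      using B1 B2 B3 B4 n1 n2 n3 n4 by (auto simp: cc_def)
    have xa: "x \<bullet> s = cc 1 * a 1" "y \<bullet> s = cc 2 * a 2" "z \<bullet> s = cc 3 * a 3" "w \<bullet> s = cc 4 * a 4"
      unfolding x_def y_def z_def w_def u_def unit_s cc_def a_def by (simp_all add: inner_commute)
    have e13: "cc 1 * a 1 = cc 3 * a 3" and e24: "cc 2 * a 2 = cc 4 * a 4" using q1 q2 xa by simp_all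
    have p12: "cc 1 * a 1 + cc 2 * a 2 > 0" using pos xa by simp
    have s13: "a 1 > 0 \<longleftrightarrow> a 3 > 0"
      using e13 cc by (metis zero_less_mult_iff not_less_iff_gr_or_eq)
    have s24: "a 2 > 0 \<longleftrightarrow> a 4 > 0"
      using e24 cc by (metis zero_less_mult_iff not_less_iff_gr_or_eq)
    have diag: "\<sigma> * orient (A 2) (A 4) (A 1) * a 3 - \<sigma> * orient (A 2) (A 4) (A 3) * a 1
      + \<sigma> * orient (A 1) (A 3) (A 2) * a 4 - \<sigma> * orient (A 1) (A 3) (A 4) * a 2 = 0"
    proof -
      have "\<sigma> * (orient (A 2) (A 4) (A 1) * a 3 - orient (A 2) (A 4) (A 3) * a 1
        + orient (A 1) (A 3) (A 2) * a 4 - orient (A 1) (A 3) (A 4) * a 2) = 0"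
        unfolding a_def using diag_identity[of "A 2" "A 4" "A 1" s "A 3" A0] by simp
      thus ?thesis by (simp add: algebra_simps)
    qed
    have L: "\<sigma> * orient (A 2) (A 4) (A 1) > 0" "\<sigma> * orient (A 2) (A 4) (A 3) < 0"
      "\<sigma> * orient (A 1) (A 3) (A 2) < 0" "\<sigma> * orient (A 1) (A 3) (A 4) > 0"
      using sg o1 o2 o3 o4 by simp_all
    show False
    proof (cases "a 1 > 0")
      case True
      note t1 = True
      show False
      proof (cases "a 2 > 0")
        case True
        have "\<forall>X\<in>S. (- s) \<bullet> X \<le> (- s) \<bullet> A0"
        proof
          fix X assume "X \<in> S"
          hence "X = A 1 \<or> X = A 2 \<or> X = A 3 \<or> X = A 4" by (simp add: S_def)
          hence "s \<bullet> (X - A0) \<ge> 0" using t1 True s13 s24 unfolding a_def by auto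
          thus "(- s) \<bullet> X \<le> (- s) \<bullet> A0" by (simp add: inner_diff_right)
        qed
        hence "- s = 0" by (rule interior_halfspace[OF intS])
        thus False using sn by simp
      next
        case False
        show False
          by (rule sign_contra[OF diag L]) (use t1 False s13 s24 in auto)
      qed
    next
      case False
      note f1 = False
      show False
      proof (cases "a 2 > 0")
        case True
        show False
          by (rule sign_contra[OF diag L]) (use f1 True s13 s24 in auto)
      next
        case False
        have "cc 1 * a 1 \<le> 0" using f1 cc by (simp add: mult_nonneg_nonpos)
        moreover have "cc 2 * a 2 \<le> 0" using False cc by (simp add: mult_nonneg_nonpos)
        ultimately show False using p12 by simp
      qed
    qed
  qed
  have sumB: "(\<Sum>i\<in>{1..4}. B i) = B 1 + B 2 + B 3 + B 4" by (rule sum4)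
  have dp: "B \<in> dynamic_plasticity A c A0 \<longleftrightarrow> s = 0 \<and> B 1 + B 2 + B 3 + B 4 = c"
    unfolding dynamic_plasticity_def mem_Collect_eq sumB using Bp S0 FT FL by auto
  show ?thesis unfolding dp E1 E2 using EQ1 EQ2 by blast
qed


end
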